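(* In the standing setup below, assume that the restriction of $h$ to $\Omega$ is one-to-one and $0\notin h(\Omega)$. Assume also $M=1$, so that for each $\gamma\in\Omega$ one has $\mathcal X_\gamma=\{a x_\gamma: a\in\mathbb C\}$ with $x_\gamma:=x_\gamma^1$ satisfying $\mathcal T(g)x_\gamma=\gamma(g)x_\gamma$ for all $g\in\mathbb G$, and assume $Ax_\gamma\neq0$ for every $\gamma\in\Omega$. Then $R_{\min}=h(F)$. Moreover, $F=\{\gamma\in\Omega: h(\gamma)\in R_{\min}\}$ can be recovered from the measurements $y_0,y_1,\dots,y_{2\kappa-1}$.
   Context: Standing setup. Let $\mathbb G$ be a locally compact abelian group (written additively) with Haar measure $dg$ and Pontryagin dual $\widehat{\mathbb G}$ (the group of continuous unitary characters $\gamma:\mathbb G\to\mathbb T$). A weight is a measurable, locally bounded, even function $w:\mathbb G\to[1,\infty)$ with $w(g_1+g_2)\le w(g_1)w(g_2)$ for all $g_1,g_2$; it is assumed to satisfy the Beurling–Domar condition $\sum_{n=0}^\infty \frac{\ln w(ng)}{1+n^2}<\infty$ for all $g\in\mathbb G$, where $ng=g+\dots+g$ ($n$ times). $L_w(\mathbb G)$ is the Banach algebra of functions $f$ with $\|f\|_w=\int_{\mathbb G}|f(g)|w(g)\,dg<\infty$, with convolution as multiplication, and $\hat f(\gamma)=\int_{\mathbb G}f(g)\gamma(-g)\,dg$. Let $\mathcal X$ be a complex Banach space and $\mathcal T:\mathbb G\to B(\mathcal X)$ a strongly continuous group representation with $\|\mathcal T(g)\|\le w(g)$ for all $g$. $\mathcal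 X$ is an $L_w(\mathbb G)$-module via $fx=\int_{\mathbb G}f(g)\mathcal T(-g)x\,dg$, assumed non-degenerate ($fx=0$ for all $f$ implies $x=0$). The Beurling spectrum of $N\subseteq\mathcal X$ is $\Lambda(N)=\{\gamma\in\widehat{\mathbb G}:$ for every $f\in L_w(\mathbb G)$ with $\hat f(\gamma)\ne0$ there is $x\in N$ with $fx\neq0\}$; $\Lambda(x):=\Lambda(\{x\})$. For closed $F\subseteq\widehat{\mathbb G}$, $\mathcal X(F)=\{x\in\mathcal X:\Lambda(x)\subseteq F\}$ and $\mathcal X_\gamma:=\mathcal X(\{\gamma\})$. Fixed data: a set $\Omega\subseteq\widehat{\mathbb G}$ and integers $M,\kappa\ge1$ such that for every $\gamma\in\Omega$, $\mathcal X_\gamma$ has finite dimension $m_\gamma\le M$, with a basis $x_\gamma^1,\dots,x_\gamma^{m_\gamma}$. $F\subseteq\Omega$ is a finite set of cardinality $\kappa$ and $x=\sum_{\gamma\in F}\sum_{m=1}^{m_\gamma}c_{\gamma m}x_\gamma^m$ with $c_{\gamma m}\in\mathbb C$, where for each $\gamma\in F$ some $c_{\gamma m}\ne0$. $A:\mathcal X\to\mathbb C^S$ ($S\in\mathbb N$) is a linear operator and $B=\sum_{n=1}^N b_n\mathcal T(g_n)$ with $g_n\in\mathbb G$, $b_n\in\mathbb C\setminus\{0\}$; set $h(\gamma)=\sum_{n=1}^N b_n\gamma(g_n)$ for $\gamma\in\widehat{\mathbb G}$. The measurements are $y_\ell=AB^\ell x$, $\ell=0,1,2,\dots$. The polynomial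 $p_{\min}(z)=\sum_{\ell=0}^{\kappa M}\alpha_\ell z^\ell$ has coefficients satisfying $\alpha_{\kappa M}=1$ and $\sum_{\ell=0}^{\kappa M}\alpha_\ell y_{\ell+k}=0$ for all $k=0,1,2,\dots$; if such coefficients are not unique, one chooses those for which the largest possible number of initial coefficients vanish, $\alpha_0=\alpha_1=\dots=\alpha_j=0$ with $j$ maximal. $R_{\min}$ denotes the set of non-zero roots of $p_{\min}$. *)

theory Defs
  imports "HOL-Analysis.Analysis" "HOL-Computational_Algebra.Polynomial"
begin

definition LCA_Haar :: "'g::{topological_ab_group_add,t2_space} measure \<Rightarrow> bool" where
  "LCA_Haar \<mu> \<longleftrightarrow>
     locally_compact_space (euclidean :: 'g topology) \<and>
     space \<mu> = UNIV \<and> sets \<mu> = sets borel \<and>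
     (\<forall>a A. A \<in> sets borel \<longrightarrow> emeasure \<mu> ((+) a ` A) = emeasure \<mu> A) \<and>
     (\<forall>K. compact K \<longrightarrow> emeasure \<mu> K < \<infinity>) \<and>
     (\<forall>U. open U \<and> U \<noteq> {} \<longrightarrow> emeasure \<mu> U > 0) \<and>
     (\<forall>A \<in> sets borel. emeasure \<mu> A = (INF U \<in> {U. open U \<and> A \<subseteq> U}. emeasure \<mu> U)) \<and>
     (\<forall>U. open U \<longrightarrow> emeasure \<mu> U = (SUP K \<in> {K. compact K \<and> K \<subseteq> U}. emeasure \<mu> K))"

definition nmul :: "nat \<Rightarrow> 'g::ab_group_add \<Rightarrow> 'g" where
  "nmul n g = ((+) g ^^ n) 0"

definition dual_group :: "('g::{topological_ab_group_add} \<Rightarrow> complex) set" where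
  "dual_group = {\<gamma>. continuous_on UNIV \<gamma> \<and> (\<forall>a b. \<gamma> (a + b) = \<gamma> a * \<gamma> b) \<and> (\<forall>a. norm (\<gamma> a) = 1)}"

definition BD_weight :: "'g::{topological_ab_group_add,t2_space} measure \<Rightarrow> ('g \<Rightarrow> real) \<Rightarrow> bool" where
  "BD_weight \<mu> w \<longleftrightarrow>
     w \<in> borel_measurable \<mu> \<and>
     (\<forall>x. \<exists>U. open U \<and> x \<in> U \<and> bounded (w ` U)) \<and>
     (\<forall>g. w (- g) = w g) \<and> (\<forall>g. w g \<ge> 1) \<and>
     (\<forall>g1 g2. w (g1 + g2) \<le> w g1 * w g2) \<and>
     (\<forall>g. summable (\<lambda>n. ln (w (nmul n g)) / (1 + real n ^ 2)))"

section \<open>Complex Banach space (a real Banach space with a compatible complex scalar multiplication)\<close>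

definition complex_structure :: "(complex \<Rightarrow> 'x::banach \<Rightarrow> 'x) \<Rightarrow> bool" where
  "complex_structure sc \<longleftrightarrow>
     (\<forall>a b v. sc a (sc b v) = sc (a * b) v) \<and>
     (\<forall>a b v. sc (a + b) v = sc a v + sc b v) \<and>
     (\<forall>a u v. sc a (u + v) = sc a u + sc a v) \<and>
     (\<forall>r v. sc (complex_of_real r) v = r *\<^sub>R v) \<and>
     (\<forall>a v. norm (sc a v) = norm a * norm v)"

definition clinear_op :: "(complex \<Rightarrow> 'x \<Rightarrow> 'x) \<Rightarrow> (complex \<Rightarrow> 'y \<Rightarrow> 'y) \<Rightarrow> ('x::ab_group_add \<Rightarrow> 'y::ab_group_add) \<Rightarrow> bool" where
  "clinear_op scx scy L \<longleftrightarrow> (\<forall>u v. L (u + v) = L u + L v) \<and> (\<forall>a v. L (scx a v) = scy a (L v))"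

definition rep_ok :: "(complex \<Rightarrow> 'x::banach \<Rightarrow> 'x) \<Rightarrow> ('g::topological_ab_group_add \<Rightarrow> real) \<Rightarrow> ('g \<Rightarrow> 'x \<Rightarrow> 'x) \<Rightarrow> bool" where
  "rep_ok sc w T \<longleftrightarrow>
     (\<forall>g. bounded_linear (T g) \<and> clinear_op sc sc (T g)) \<and>
     T 0 = id \<and> (\<forall>a b. T (a + b) = T a \<circ> T b) \<and>
     (\<forall>v. continuous_on UNIV (\<lambda>g. T g v)) \<and>
     (\<forall>g v. norm (T g v) \<le> w g * norm v)"

definition Lw :: "'g::topological_ab_group_add measure \<Rightarrow> ('g \<Rightarrow> real) \<Rightarrow> ('g \<Rightarrow> complex) set" where
  "Lw \<mu> w = {f. f \<in> borel_measurable \<mu> \<and> integrable \<mu> (\<lambda>g. norm (f g) * w g)}"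

definition fourier :: "'g::topological_ab_group_add measure \<Rightarrow> ('g \<Rightarrow> complex) \<Rightarrow> ('g \<Rightarrow> complex) \<Rightarrow> complex" where
  "fourier \<mu> f \<gamma> = (LINT g|\<mu>. f g * \<gamma> (- g))"

text \<open>f x = integral of f(g) T(-g) x dg, a vector-valued integral (defined weakly, i.e. via
  all continuous real-linear functionals; it agrees with the Bochner integral).\<close>
definition module_act :: "'g::topological_ab_group_add measure \<Rightarrow> (complex \<Rightarrow> 'x::banach \<Rightarrow> 'x)
    \<Rightarrow> ('g \<Rightarrow> 'x \<Rightarrow> 'x) \<Rightarrow> ('g \<Rightarrow> complex) \<Rightarrow> 'x \<Rightarrow> 'x" where
  "module_act \<mu> sc T f v = (THE y. \<forall>\<phi>::'x \<Rightarrow> real. bounded_linear \<phi> \<longrightarrow>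
       (\<lambda>g. \<phi> (sc (f g) (T (- g) v))) \<in> borel_measurable \<mu> \<and>
       integrable \<mu> (\<lambda>g. \<phi> (sc (f g) (T (- g) v))) \<and>
       \<phi> y = (LINT g|\<mu>. \<phi> (sc (f g) (T (- g) v))))"

definition nondegenerate :: "'g::topological_ab_group_add measure \<Rightarrow> ('g \<Rightarrow> real) \<Rightarrow> (complex \<Rightarrow> 'x::banach \<Rightarrow> 'x)
    \<Rightarrow> ('g \<Rightarrow> 'x \<Rightarrow> 'x) \<Rightarrow> bool" where
  "nondegenerate \<mu> w sc T \<longleftrightarrow> (\<forall>v. (\<forall>f \<in> Lw \<mu> w. module_act \<mu> sc T f v = 0) \<longrightarrow> v = 0)"

definition beurling_spectrum :: "'g::topological_ab_group_add measure \<Rightarrow> ('g \<Rightarrow> real) \<Rightarrow> (complex \<Rightarrow> 'x::banach \<Rightarrow> 'x)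
    \<Rightarrow> ('g \<Rightarrow> 'x \<Rightarrow> 'x) \<Rightarrow> 'x set \<Rightarrow> ('g \<Rightarrow> complex) set" where
  "beurling_spectrum \<mu> w sc T N = {\<gamma> \<in> dual_group. \<forall>f \<in> Lw \<mu> w.
      fourier \<mu> f \<gamma> \<noteq> 0 \<longrightarrow> (\<exists>v \<in> N. module_act \<mu> sc T f v \<noteq> 0)}"

definition spectral_subspace :: "'g::topological_ab_group_add measure \<Rightarrow> ('g \<Rightarrow> real) \<Rightarrow> (complex \<Rightarrow> 'x::banach \<Rightarrow> 'x)
    \<Rightarrow> ('g \<Rightarrow> 'x \<Rightarrow> 'x) \<Rightarrow> ('g \<Rightarrow> complex) set \<Rightarrow> 'x set" where
  "spectral_subspace \<mu> w sc T F = {v. beurling_spectrum \<mu> w sc T {v} \<subseteq> F}"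

text \<open>alpha is an admissible choice of p_min for the data y and degree d:
  monic of degree d (coefficient alpha_d = 1), annihilating the sequence y, and among all such
  polynomials with the largest number of vanishing initial coefficients, i.e. with maximal
  multiplicity of the root 0.\<close>
definition annihilates :: "(nat \<Rightarrow> complex ^ 's) \<Rightarrow> nat \<Rightarrow> complex poly \<Rightarrow> bool" where
  "annihilates y d p \<longleftrightarrow> degree p = d \<and> coeff p d = 1 \<and>
     (\<forall>k. (\<Sum>l\<le>d. coeff p l *s y (l + k)) = 0)"

definition is_pmin :: "(nat \<Rightarrow> complex ^ 's) \<Rightarrow> nat \<Rightarrow> complex poly \<Rightarrow> bool" where
  "is_pmin y d p \<longleftrightarrow> annihilates y d p \<and>
     (\<forall>q. annihilates y d q \<longrightarrow> (\<forall>j. (\<forall>i\<le>j. coeff q i = 0) \<longrightarrow> (\<forall>i\<le>j. coeff p i = 0)))"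

definition nonzero_roots :: "complex poly \<Rightarrow> complex set" where
  "nonzero_roots p = {z. z \<noteq> 0 \<and> poly p z = 0}"

end

theory Submission
  imports Defs
begin
lemma add_hom_sum:
  fixes L :: "'a::ab_group_add \<Rightarrow> 'b::ab_group_add"
  assumes "\<And>u v. L (u+v) = L u + L v"
  shows "L (sum f S) = (\<Sum>i\<in>S. L (f i))"
proof -
  have z: "L 0 = 0" using assms[of 0 0] by simp
  show ?thesis by (induction S rule: infinite_finite_induct) (auto simp: z assms)
qed

lemma smult_sum_right: "(a::complex) *s sum f S = (\<Sum>i\<in>S. a *s f i)"
  by (simp add: vec_eq_iff sum_component sum_distrib_left)
lemma smult_sum_left: "sum f S *s (v::complex^'n) = (\<Sum>i\<in>S. f i *s v)"
  by (simp add: vec_eq_iff sum_component sum_distrib_right)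

lemma sum_swap_smult:
  "(\<Sum>l\<in>L. (a l::complex) *s (\<Sum>\<gamma>\<in>S. b l \<gamma> *s (u \<gamma>::complex^'n))) = (\<Sum>\<gamma>\<in>S. (\<Sum>l\<in>L. a l * b l \<gamma>) *s u \<gamma>)"
  by (simp add: smult_sum_right smult_sum_left vector_smult_assoc sum.swap[of _ L])

lemma vandermonde_vec:
  fixes u :: "'a \<Rightarrow> complex^'n" and lam :: "'a \<Rightarrow> complex"
  assumes S: "finite S" and inj: "inj_on lam S"
    and z: "\<And>l. l < card S \<Longrightarrow> (\<Sum>\<gamma>\<in>S. lam \<gamma> ^ l *s u \<gamma>) = 0" and g0: "\<gamma>0 \<in> S"
  shows "u \<gamma>0 = 0"
proof -
  define q where "q = (\<Prod>\<gamma>\<in>S-{\<gamma>0}. [:-lam \<gamma>, 1:])"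
  have dq: "degree q = card S - 1" unfolding q_def
    by (subst degree_prod_eq_sum_degree) (auto simp: S g0 card_Diff_singleton)
  have cS: "card S \<ge> 1" using S g0 by (metis One_nat_def Suc_leI card_gt_0_iff empty_iff)
  have "(\<Sum>l\<le>degree q. coeff q l *s (\<Sum>\<gamma>\<in>S. lam \<gamma> ^ l *s u \<gamma>)) = 0"
    by (rule sum.neutral) (use z dq cS in auto)
  also have "(\<Sum>l\<le>degree q. coeff q l *s (\<Sum>\<gamma>\<in>S. lam \<gamma> ^ l *s u \<gamma>)) = (\<Sum>\<gamma>\<in>S. poly q (lam \<gamma>) *s u \<gamma>)"
    by (simp add: sum_swap_smult poly_altdef)
  also have "\<dots> = poly q (lam \<gamma>0) *s u \<gamma>0"
  proof -
    have "(\<Sum>\<gamma>\<in>S-{\<gamma>0}. poly q (lam \<gamma>) *s u \<gamma>) = 0"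
      by (rule sum.neutral) (auto simp: q_def poly_prod S)
    then show ?thesis using sum.remove[OF S g0, of "\<lambda>\<gamma>. poly q (lam \<gamma>) *s u \<gamma>"] by simp
  qed
  finally have "poly q (lam \<gamma>0) *s u \<gamma>0 = 0" by simp
  moreover have "poly q (lam \<gamma>0) \<noteq> 0"
    using inj g0 S by (auto simp: q_def poly_prod inj_on_def)
  ultimately show ?thesis by simp
qed
theorem theorem2p2:
  fixes \<mu> :: "'g::{topological_ab_group_add,t2_space} measure"
    and w :: "'g \<Rightarrow> real"
    and sc :: "complex \<Rightarrow> 'x::banach \<Rightarrow> 'x"
    and T :: "'g \<Rightarrow> 'x \<Rightarrow> 'x"
    and \<Omega> :: "('g \<Rightarrow> complex) set"
    and xv :: "('g \<Rightarrow> complex) \<Rightarrow> 'x"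
    and \<kappa> :: nat
    and F :: "('g \<Rightarrow> complex) set"
    and c :: "('g \<Rightarrow> complex) \<Rightarrow> complex"
    and A :: "'x \<Rightarrow> complex ^ 's"
    and N :: nat and gs :: "nat \<Rightarrow> 'g" and b :: "nat \<Rightarrow> complex"
    and B :: "'x \<Rightarrow> 'x" and h :: "('g \<Rightarrow> complex) \<Rightarrow> complex"
    and x :: 'x and y :: "nat \<Rightarrow> complex ^ 's"
  assumes haar: "LCA_Haar \<mu>"
    and weight: "BD_weight \<mu> w"
    and cstruct: "complex_structure sc"
    and rep: "rep_ok sc w T"
    and nondeg: "nondegenerate \<mu> w sc T"
    and Omega_dual: "\<Omega> \<subseteq> dual_group"
    and M1: "\<And>\<gamma>. \<gamma> \<in> \<Omega> \<Longrightarrow> spectral_subspace \<mu> w sc T {\<gamma>} = {sc a (xv \<gamma>) | a. True}"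
    and eigen: "\<And>\<gamma> g. \<gamma> \<in> \<Omega> \<Longrightarrow> T g (xv \<gamma>) = sc (\<gamma> g) (xv \<gamma>)"
    and kappa: "\<kappa> \<ge> 1"
    and F_sub: "F \<subseteq> \<Omega>" and F_fin: "finite F" and F_card: "card F = \<kappa>"
    and c_nz: "\<And>\<gamma>. \<gamma> \<in> F \<Longrightarrow> c \<gamma> \<noteq> 0"
    and x_def: "x = (\<Sum>\<gamma>\<in>F. sc (c \<gamma>) (xv \<gamma>))"
    and A_lin: "clinear_op sc (\<lambda>a v. a *s v) A"
    and b_nz: "\<And>n. n \<in> {1..N} \<Longrightarrow> b n \<noteq> 0"
    and B_def: "B = (\<lambda>v. \<Sum>n=1..N. sc (b n) (T (gs n) v))"
    and h_def: "h = (\<lambda>\<gamma>. \<Sum>n=1..N. b n * \<gamma> (gs n))"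
    and y_def: "y = (\<lambda>l. A ((B ^^ l) x))"
    and h_inj: "inj_on h \<Omega>"
    and h_nz: "0 \<notin> h ` \<Omega>"
    and A_nz: "\<And>\<gamma>. \<gamma> \<in> \<Omega> \<Longrightarrow> A (xv \<gamma>) \<noteq> 0"
  shows "(\<exists>p. is_pmin y \<kappa> p) \<and>
         (\<forall>p. is_pmin y \<kappa> p \<longrightarrow> nonzero_roots p = h ` F \<and> F = {\<gamma> \<in> \<Omega>. h \<gamma> \<in> nonzero_roots p}) \<and>
         (\<forall>F' c'. F' \<subseteq> \<Omega> \<and> finite F' \<and> card F' = \<kappa> \<and> (\<forall>\<gamma>\<in>F'. c' \<gamma> \<noteq> 0) \<and>
             (\<forall>l < 2 * \<kappa>. A ((B ^^ l) (\<Sum>\<gamma>\<in>F'. sc (c' \<gamma>) (xv \<gamma>))) = y l)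
           \<longrightarrow> F' = F)"
proof -
  have sc_mult: "\<And>a b v. sc a (sc b v) = sc (a * b) v"
    and sc_addl: "\<And>a b v. sc (a + b) v = sc a v + sc b v"
    and sc_addr: "\<And>a u v. sc a (u + v) = sc a u + sc a v"
    using cstruct unfolding complex_structure_def by auto
  have T_add: "\<And>g u v. T g (u + v) = T g u + T g v"
    and T_sc: "\<And>g a v. T g (sc a v) = sc a (T g v)"
    using rep unfolding rep_ok_def clinear_op_def by auto
  have A_add: "\<And>u v. A (u + v) = A u + A v" and A_sc: "\<And>a v. A (sc a v) = a *s A v"
    using A_lin unfolding clinear_op_def by auto
  have sc_sumr: "\<And>a f (S::('g\<Rightarrow>complex) set). sc a (sum f S) = (\<Sum>i\<in>S. sc a (f i))"
    by (rule add_hom_sum) (simp add: sc_addr)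
  have sc_suml: "\<And>f (S::nat set) v. sc (sum f S) v = (\<Sum>i\<in>S. sc (f i) v)"
    by (rule add_hom_sum[where L="\<lambda>a. sc a v" for v]) (simp add: sc_addl)
  have T_sum: "\<And>g f (S::('g\<Rightarrow>complex) set). T g (sum f S) = (\<Sum>i\<in>S. T g (f i))"
    by (rule add_hom_sum) (simp add: T_add)
  have A_sum: "\<And>f (S::('g\<Rightarrow>complex) set). A (sum f S) = (\<Sum>i\<in>S. A (f i))"
    by (rule add_hom_sum) (simp add: A_add)
  have Bstep: "B (\<Sum>\<gamma>\<in>S. sc (e \<gamma>) (xv \<gamma>)) = (\<Sum>\<gamma>\<in>S. sc (e \<gamma> * h \<gamma>) (xv \<gamma>))"
    if S: "S \<subseteq> \<Omega>" for S e
  proof -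
    have "B (\<Sum>\<gamma>\<in>S. sc (e \<gamma>) (xv \<gamma>)) = (\<Sum>n=1..N. \<Sum>\<gamma>\<in>S. sc (b n * (e \<gamma> * \<gamma> (gs n))) (xv \<gamma>))"
      unfolding B_def using S
      by (auto simp: T_sum sc_sumr T_sc eigen sc_mult subsetD intro!: sum.cong)
    also have "\<dots> = (\<Sum>\<gamma>\<in>S. \<Sum>n=1..N. sc (b n * (e \<gamma> * \<gamma> (gs n))) (xv \<gamma>))"
      by (rule sum.swap)
    also have "\<dots> = (\<Sum>\<gamma>\<in>S. sc (e \<gamma> * h \<gamma>) (xv \<gamma>))"
      by (auto simp: sc_suml[symmetric] h_def sum_distrib_left mult_ac intro!: sum.cong)
    finally show ?thesis .
  qed
  have Bpow: "(B ^^ l) (\<Sum>\<gamma>\<in>S. sc (e \<gamma>) (xv \<gamma>)) = (\<Sum>\<gamma>\<in>S. sc (e \<gamma> * h \<gamma> ^ l) (xv \<gamma>))"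
    if S: "S \<subseteq> \<Omega>" for S e l
    by (induction l) (simp_all add: Bstep[OF S] mult_ac)
  have meas: "A ((B ^^ l) (\<Sum>\<gamma>\<in>S. sc (e \<gamma>) (xv \<gamma>))) = (\<Sum>\<gamma>\<in>S. h \<gamma> ^ l *s (e \<gamma> *s A (xv \<gamma>)))"
    if S: "S \<subseteq> \<Omega>" for S e l
    by (simp add: Bpow[OF S] A_sum A_sc vector_smult_assoc mult_ac)
  define v where "v \<gamma> = c \<gamma> *s A (xv \<gamma>)" for \<gamma>
  have v_nz: "\<gamma> \<in> F \<Longrightarrow> v \<gamma> \<noteq> 0" for \<gamma>
    using c_nz A_nz F_sub by (auto simp: v_def)
  have y_eq: "y l = (\<Sum>\<gamma>\<in>F. h \<gamma> ^ l *s v \<gamma>)" for l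
    unfolding y_def x_def v_def using meas[OF F_sub] by simp
  have hinjF: "inj_on h F" using h_inj F_sub inj_on_subset by blast
  have ann_iff: "(\<forall>k. (\<Sum>l\<le>\<kappa>. coeff q l *s y (l + k)) = 0) \<longleftrightarrow> (\<forall>\<gamma>\<in>F. poly q (h \<gamma>) = 0)"
    if dq: "degree q = \<kappa>" for q
  proof -
    have eq: "(\<Sum>l\<le>\<kappa>. coeff q l *s y (l + k)) = (\<Sum>\<gamma>\<in>F. h \<gamma> ^ k *s (poly q (h \<gamma>) *s v \<gamma>))" for k
    proof -
      have "(\<Sum>l\<le>\<kappa>. coeff q l *s y (l + k)) = (\<Sum>\<gamma>\<in>F. (\<Sum>l\<le>\<kappa>. coeff q l * h \<gamma> ^ (l + k)) *s v \<gamma>)"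
        by (simp add: y_eq sum_swap_smult)
      also have "\<dots> = (\<Sum>\<gamma>\<in>F. h \<gamma> ^ k *s (poly q (h \<gamma>) *s v \<gamma>))"
        by (auto simp: vector_smult_assoc poly_altdef dq power_add sum_distrib_left mult_ac intro!: sum.cong)
      finally show ?thesis .
    qed
    show ?thesis
    proof
      assume H: "\<forall>k. (\<Sum>l\<le>\<kappa>. coeff q l *s y (l + k)) = 0"
      show "\<forall>\<gamma>\<in>F. poly q (h \<gamma>) = 0"
      proof
        fix \<gamma> assume g: "\<gamma> \<in> F"
        have "poly q (h \<gamma>) *s v \<gamma> = 0"
          by (rule vandermonde_vec[OF F_fin hinjF _ g]) (use H eq in auto)
        then show "poly q (h \<gamma>) = 0" using v_nz[OF g] by simp
      qed
    qed (simp add: eq)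
  qed
  define p0 where "p0 = (\<Prod>\<gamma>\<in>F. [:- h \<gamma>, 1:])"
  have dp0: "degree p0 = \<kappa>" unfolding p0_def
    by (subst degree_prod_eq_sum_degree) (auto simp: F_card)
  have cp0: "coeff p0 \<kappa> = 1"
    using lead_coeff_prod[of "\<lambda>\<gamma>. [:- h \<gamma>, 1:]" F] dp0 unfolding p0_def by simp
  have poly_p0: "poly p0 z = 0 \<longleftrightarrow> z \<in> h ` F" for z
    unfolding p0_def by (auto simp: poly_prod F_fin)
  have ann_p0: "annihilates y \<kappa> p0"
    unfolding annihilates_def using dp0 cp0 ann_iff[OF dp0] poly_p0 by auto
  have uniq: "q = p0" if "annihilates y \<kappa> q" for q
  proof (rule ccontr)
    assume ne: "q \<noteq> p0"
    have dq: "degree q = \<kappa>" and cq: "coeff q \<kappa> = 1"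
      and aq: "\<forall>k. (\<Sum>l\<le>\<kappa>. coeff q l *s y (l + k)) = 0"
      using that unfolding annihilates_def by auto
    have roots: "\<forall>\<gamma>\<in>F. poly q (h \<gamma>) = 0" using ann_iff[OF dq] aq by simp
    define r where "r = q - p0"
    have r0: "r \<noteq> 0" using ne by (simp add: r_def)
    have dr: "degree r \<le> \<kappa>" unfolding r_def using degree_diff_le[of q \<kappa> p0] dq dp0 by simp
    have "coeff r \<kappa> = 0" by (simp add: r_def cq cp0)
    hence "degree r \<noteq> \<kappa>" using r0 by (metis leading_coeff_0_iff)
    hence dr': "degree r < \<kappa>" using dr by simp
    have sub: "h ` F \<subseteq> {z. poly r z = 0}" using roots poly_p0 by (auto simp: r_def)
    have "card (h ` F) \<le> card {z. poly r z = 0}"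
      by (rule card_mono[OF poly_roots_finite[OF r0] sub])
    also have "\<dots> \<le> degree r" by (rule card_poly_roots_bound[OF r0])
    finally show False using dr' card_image[OF hinjF] F_card by simp
  qed
  have pmin: "is_pmin y \<kappa> p0" unfolding is_pmin_def
  proof (intro conjI allI impI ann_p0)
    fix q j i assume "annihilates y \<kappa> q" "\<forall>i\<le>j. coeff q i = 0" "i \<le> j"
    then show "coeff p0 i = 0" using uniq by metis
  qed
  have part2: "nonzero_roots p = h ` F \<and> F = {\<gamma> \<in> \<Omega>. h \<gamma> \<in> nonzero_roots p}" if "is_pmin y \<kappa> p" for p
  proof -
    have pp: "p = p0" using that uniq unfolding is_pmin_def by blast
    have nr: "nonzero_roots p = h ` F"
      using h_nz F_sub by (auto simp: pp nonzero_roots_def poly_p0)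
    have "F = {\<gamma> \<in> \<Omega>. h \<gamma> \<in> h ` F}"
      using F_sub h_inj by (auto simp: inj_on_def)
    with nr show ?thesis by simp
  qed
  have part3: "F' = F" if H: "F' \<subseteq> \<Omega> \<and> finite F' \<and> card F' = \<kappa> \<and> (\<forall>\<gamma>\<in>F'. c' \<gamma> \<noteq> 0) \<and>
             (\<forall>l < 2 * \<kappa>. A ((B ^^ l) (\<Sum>\<gamma>\<in>F'. sc (c' \<gamma>) (xv \<gamma>))) = y l)" for F' c'
  proof -
    define U where "U = F \<union> F'"
    have U: "finite U" "U \<subseteq> \<Omega>" using H F_fin F_sub by (auto simp: U_def)
    have cU: "card U \<le> 2 * \<kappa>" using card_Un_le[of F F'] H F_card by (simp add: U_def)
    define u where "u \<gamma> = (if \<gamma> \<in> F' then c' \<gamma> *s A (xv \<gamma>) else 0) - (if \<gamma> \<in> F then v \<gamma> else 0)" for \<gamma>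
    have z: "(\<Sum>\<gamma>\<in>U. h \<gamma> ^ l *s u \<gamma>) = 0" if l: "l < card U" for l
    proof -
      have e1: "(\<Sum>\<gamma>\<in>U. h \<gamma> ^ l *s (if \<gamma> \<in> F' then c' \<gamma> *s A (xv \<gamma>) else 0)) = y l"
      proof -
        have "(\<Sum>\<gamma>\<in>U. h \<gamma> ^ l *s (if \<gamma> \<in> F' then c' \<gamma> *s A (xv \<gamma>) else 0))
            = (\<Sum>\<gamma>\<in>F'. h \<gamma> ^ l *s (c' \<gamma> *s A (xv \<gamma>)))"
          by (rule sum.mono_neutral_cong_right) (use U in \<open>auto simp: U_def\<close>)
        also have "\<dots> = y l" using H l cU meas[where S=F' and e=c' and l=l] by auto
        finally show ?thesis .
      qed
      have e2: "(\<Sum>\<gamma>\<in>U. h \<gamma> ^ l *s (if \<gamma> \<in> F then v \<gamma> else 0)) = y l"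
      proof -
        have "(\<Sum>\<gamma>\<in>U. h \<gamma> ^ l *s (if \<gamma> \<in> F then v \<gamma> else 0))
            = (\<Sum>\<gamma>\<in>F. h \<gamma> ^ l *s v \<gamma>)"
          by (rule sum.mono_neutral_cong_right) (use U in \<open>auto simp: U_def\<close>)
        also have "\<dots> = y l" by (simp add: y_eq)
        finally show ?thesis .
      qed
      have "(\<Sum>\<gamma>\<in>U. h \<gamma> ^ l *s u \<gamma>) = (\<Sum>\<gamma>\<in>U. h \<gamma> ^ l *s (if \<gamma> \<in> F' then c' \<gamma> *s A (xv \<gamma>) else 0))
          - (\<Sum>\<gamma>\<in>U. h \<gamma> ^ l *s (if \<gamma> \<in> F then v \<gamma> else 0))"
        by (simp add: u_def vector_ssub_ldistrib sum_subtractf)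
      with e1 e2 show ?thesis by simp
    qed
    have hU: "inj_on h U" using h_inj U(2) inj_on_subset by blast
    have uz: "\<gamma> \<in> U \<Longrightarrow> u \<gamma> = 0" for \<gamma> by (rule vandermonde_vec[OF U(1) hU z])
    have "F' \<subseteq> F"
    proof
      fix \<gamma> assume g: "\<gamma> \<in> F'"
      show "\<gamma> \<in> F"
      proof (rule ccontr)
        assume "\<gamma> \<notin> F"
        hence "c' \<gamma> *s A (xv \<gamma>) = 0" using uz[of \<gamma>] g by (simp add: u_def U_def)
        thus False using H g A_nz by auto
      qed
    qed
    thus ?thesis using H F_fin F_card by (metis card_subset_eq)
  qed
  show ?thesis using pmin part2 part3 by blast
qed

end
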